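(* Let $H$ be a connected pointed block graph, let $Q$ be a near-leaf block of $H$, and let $v$ be the anchor of $Q$ if it exists and otherwise any cut-vertex of $Q$. Let $x\neq v$ be a cut-vertex of $Q$ and let $L$ be a leaf block of $H$ that is a neighbour of $Q$ and contains $x$. Then every maximal co-interval subgraph $K$ of $H$ with $E(L)\subseteq E(K)$ satisfies $E(K)=E(Q_{x,y})$ for some $y\in V(Q)$.
   Context: All graphs are finite and simple. A block is a maximal connected subgraph with no cut-vertex of its own; a block graph is one whose blocks are all complete. A cut-vertex is a vertex whose removal increases the number of connected components. A block is a leaf block if it contains exactly one cut-vertex, an internal block if it contains at least two, and an edge block if it has exactly two vertices; two distinct blocks are neighbours if they share a vertex. A graph is pointed if all its leaf blocks are edge blocks. An internal block $Q$ is a near-leaf block if either all neighbours of $Q$ are leaf blocks, or all internal block neighbours of $Q$ share with $Q$ one and the same cut-vertex, called the anchor of $Q$. For a clique $Q$ and $x,y\in V(Q)$, the big ant is $Q_{x,y}=\big(V(Q)\cup N_H(x)\cup N_H(y),\ E(Q)\cup\delta_H(x)\cup\delta_H(y)\big)$. A graph is co-interval if its vertices can be assigned closed real intervals such that two vertices are adjacent iff their intervals are disjoint. A co-interval subgraph $K$ of $H$ is maximal if no co-interval subgraph $K'$ of $H$ has $E(K)\subsetneq E(K')$. *)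

theory Defs
  imports Complex_Main
begin

type_synonym 'a graph = "'a set \<times> 'a set set"

abbreviation verts :: "'a graph \<Rightarrow> 'a set" where "verts G \<equiv> fst G"
abbreviation edges :: "'a graph \<Rightarrow> 'a set set" where "edges G \<equiv> snd G"

definition wf_graph :: "'a graph \<Rightarrow> bool" where
  "wf_graph G \<longleftrightarrow> finite (verts G) \<and> (\<forall>e\<in>edges G. e \<subseteq> verts G \<and> card e = 2)"

definition subgraph :: "'a graph \<Rightarrow> 'a graph \<Rightarrow> bool" where
  "subgraph K H \<longleftrightarrow> wf_graph K \<and> verts K \<subseteq> verts H \<and> edges K \<subseteq> edges H"

definition adj :: "'a graph \<Rightarrow> ('a \<times> 'a) set" where
  "adj G = {(u, w). {u, w} \<in> edges G}"

definition reach :: "'a graph \<Rightarrow> ('a \<times> 'a) set" where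
  "reach G = {(u, w). u \<in> verts G \<and> w \<in> verts G \<and> (u, w) \<in> (adj G)\<^sup>*}"

definition connected_graph :: "'a graph \<Rightarrow> bool" where
  "connected_graph G \<longleftrightarrow> verts G \<noteq> {} \<and> (\<forall>u\<in>verts G. \<forall>w\<in>verts G. (u, w) \<in> (adj G)\<^sup>*)"

definition ncomp :: "'a graph \<Rightarrow> nat" where
  "ncomp G = card (verts G // reach G)"

definition del_vertex :: "'a graph \<Rightarrow> 'a \<Rightarrow> 'a graph" where
  "del_vertex G v = (verts G - {v}, {e \<in> edges G. v \<notin> e})"

definition cut_vertex :: "'a graph \<Rightarrow> 'a \<Rightarrow> bool" where
  "cut_vertex G v \<longleftrightarrow> v \<in> verts G \<and> ncomp (del_vertex G v) > ncomp G"

definition biconn_piece :: "'a graph \<Rightarrow> bool" where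
  "biconn_piece B \<longleftrightarrow> connected_graph B \<and> (\<forall>v. \<not> cut_vertex B v)"

definition is_block :: "'a graph \<Rightarrow> 'a graph \<Rightarrow> bool" where
  "is_block H B \<longleftrightarrow> subgraph B H \<and> biconn_piece B \<and>
     (\<forall>B'. subgraph B' H \<and> biconn_piece B' \<and> verts B \<subseteq> verts B' \<and> edges B \<subseteq> edges B' \<longrightarrow> B' = B)"

definition complete :: "'a graph \<Rightarrow> bool" where
  "complete G \<longleftrightarrow> edges G = {e. e \<subseteq> verts G \<and> card e = 2}"

definition block_graph :: "'a graph \<Rightarrow> bool" where
  "block_graph H \<longleftrightarrow> (\<forall>B. is_block H B \<longrightarrow> complete B)"

definition leaf_block :: "'a graph \<Rightarrow> 'a graph \<Rightarrow> bool" where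
  "leaf_block H B \<longleftrightarrow> is_block H B \<and> card {c \<in> verts B. cut_vertex H c} = 1"

definition internal_block :: "'a graph \<Rightarrow> 'a graph \<Rightarrow> bool" where
  "internal_block H B \<longleftrightarrow> is_block H B \<and> card {c \<in> verts B. cut_vertex H c} \<ge> 2"

definition edge_block :: "'a graph \<Rightarrow> 'a graph \<Rightarrow> bool" where
  "edge_block H B \<longleftrightarrow> is_block H B \<and> card (verts B) = 2"

definition block_nbr :: "'a graph \<Rightarrow> 'a graph \<Rightarrow> 'a graph \<Rightarrow> bool" where
  "block_nbr H B1 B2 \<longleftrightarrow> is_block H B1 \<and> is_block H B2 \<and> B1 \<noteq> B2 \<and> verts B1 \<inter> verts B2 \<noteq> {}"

definition pointed :: "'a graph \<Rightarrow> bool" where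
  "pointed H \<longleftrightarrow> (\<forall>B. leaf_block H B \<longrightarrow> edge_block H B)"

definition is_anchor :: "'a graph \<Rightarrow> 'a graph \<Rightarrow> 'a \<Rightarrow> bool" where
  "is_anchor H Q c \<longleftrightarrow> internal_block H Q \<and> c \<in> verts Q \<and> cut_vertex H c \<and>
     (\<exists>B. block_nbr H Q B \<and> internal_block H B) \<and>
     (\<forall>B. block_nbr H Q B \<and> internal_block H B \<longrightarrow> c \<in> verts B)"

definition near_leaf_block :: "'a graph \<Rightarrow> 'a graph \<Rightarrow> bool" where
  "near_leaf_block H Q \<longleftrightarrow> internal_block H Q \<and>
     ((\<forall>B. block_nbr H Q B \<longrightarrow> leaf_block H B) \<or> (\<exists>c. is_anchor H Q c))"

definition delta :: "'a graph \<Rightarrow> 'a \<Rightarrow> 'a set set" where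
  "delta H x = {e \<in> edges H. x \<in> e}"

definition nbhd :: "'a graph \<Rightarrow> 'a \<Rightarrow> 'a set" where
  "nbhd H x = {w. {x, w} \<in> edges H}"

definition big_ant :: "'a graph \<Rightarrow> 'a graph \<Rightarrow> 'a \<Rightarrow> 'a \<Rightarrow> 'a graph" where
  "big_ant H Q x y = (verts Q \<union> nbhd H x \<union> nbhd H y, edges Q \<union> delta H x \<union> delta H y)"

text \<open>Co-interval: closed intervals [fst (f v), snd (f v)], adjacent iff disjoint.\<close>
definition co_interval :: "'a graph \<Rightarrow> bool" where
  "co_interval G \<longleftrightarrow> (\<exists>f :: 'a \<Rightarrow> real \<times> real.
     (\<forall>v\<in>verts G. fst (f v) \<le> snd (f v)) \<and>
     (\<forall>u\<in>verts G. \<forall>w\<in>verts G. u \<noteq> w \<longrightarrow>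
        ({u, w} \<in> edges G \<longleftrightarrow> snd (f u) < fst (f w) \<or> snd (f w) < fst (f u))))"

definition max_co_interval_subgraph :: "'a graph \<Rightarrow> 'a graph \<Rightarrow> bool" where
  "max_co_interval_subgraph H K \<longleftrightarrow> subgraph K H \<and> co_interval K \<and>
     \<not> (\<exists>K'. subgraph K' H \<and> co_interval K' \<and> edges K \<subset> edges K')"

end

theory Submission
  imports Defs
begin


definition ind :: "'a graph \<Rightarrow> 'a set \<Rightarrow> 'a graph" where
  "ind H S = (S, {e \<in> edges H. e \<subseteq> S})"

definition conn :: "'a graph \<Rightarrow> 'a set \<Rightarrow> bool" where
  "conn H S \<longleftrightarrow> (\<forall>u\<in>S. \<forall>w\<in>S. (u, w) \<in> (adj (ind H S))\<^sup>*)"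

lemma adj_sym: "(u, w) \<in> adj G \<Longrightarrow> (w, u) \<in> adj G"
  by (simp add: adj_def insert_commute)

lemma rt_sym: "(u, w) \<in> (adj G)\<^sup>* \<Longrightarrow> (w, u) \<in> (adj G)\<^sup>*"
proof (induction rule: rtrancl_induct)
  case base then show ?case by simp
next
  case (step y z) then show ?case
    by (meson adj_sym converse_rtrancl_into_rtrancl)
qed

lemma adj_ind: "(u, w) \<in> adj (ind H S) \<longleftrightarrow> {u, w} \<in> edges H \<and> u \<in> S \<and> w \<in> S"
  by (auto simp: adj_def ind_def)

lemma reach_in: "(u, w) \<in> (adj (ind H S))\<^sup>* \<Longrightarrow> u \<in> S \<Longrightarrow> w \<in> S"
  by (induction rule: rtrancl_induct) (auto simp: adj_ind)

lemma rt_mono: "(u, w) \<in> (adj (ind H T))\<^sup>* \<Longrightarrow> T \<subseteq> S \<Longrightarrow> (u, w) \<in> (adj (ind H S))\<^sup>*"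
proof (induction rule: rtrancl_induct)
  case base then show ?case by simp
next
  case (step y z) then show ?case
    by (meson adj_ind rtrancl.simps subsetD)
qed

lemma conn_root: assumes "r \<in> S" "\<And>u. u \<in> S \<Longrightarrow> (u, r) \<in> (adj (ind H S))\<^sup>*"
  shows "conn H S"
  unfolding conn_def using assms by (meson rt_sym rtrancl_trans)

lemma hub: assumes "s \<in> S" "\<And>u. u \<in> S \<Longrightarrow> u = s \<or> {s, u} \<in> edges H"
  shows "conn H S"
proof (rule conn_root[OF assms(1)])
  fix u assume "u \<in> S"
  then show "(u, s) \<in> (adj (ind H S))\<^sup>*"
    using assms by (metis adj_ind insert_commute r_into_rtrancl rtrancl.rtrancl_refl)
qed


lemma ncomp_conn: assumes "S \<noteq> {}" "conn H S" shows "ncomp (ind H S) = 1"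
proof -
  obtain s where s: "s \<in> S" using assms by auto
  have R: "reach (ind H S) `` {u} = S" if "u \<in> S" for u
  proof
    show "reach (ind H S) `` {u} \<subseteq> S" by (auto simp: reach_def ind_def)
    show "S \<subseteq> reach (ind H S) `` {u}" using assms(2) that unfolding conn_def reach_def
      by (auto simp: ind_def)
  qed
  have "S // reach (ind H S) = {S}"
    unfolding quotient_def using R s by blast
  then show ?thesis by (simp add: ncomp_def ind_def)
qed
lemma ncomp_empty: "ncomp (ind H {}) = 0"
  by (simp add: ncomp_def ind_def)

lemma ncomp_le1_conn: assumes "finite S" "S \<noteq> {}" "ncomp (ind H S) \<le> 1" shows "conn H S"
proof -
  let ?r = "reach (ind H S)"
  have fin: "finite (S // ?r)"
    by (rule finite_quotient[OF assms(1)]) (auto simp: reach_def ind_def)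
  have all: "\<forall>A\<in>S // ?r. \<forall>B\<in>S // ?r. A = B"
    using assms(3) card_le_Suc0_iff_eq[OF fin] by (simp add: ncomp_def ind_def)
  show ?thesis unfolding conn_def
  proof (intro ballI)
    fix u w assume u: "u \<in> S" and w: "w \<in> S"
    have "?r `` {u} = ?r `` {w}" using all u w by (simp add: quotientI)
    moreover have "w \<in> ?r `` {w}" using w by (simp add: reach_def ind_def)
    ultimately have "(u, w) \<in> ?r" by auto
    then show "(u, w) \<in> (adj (ind H S))\<^sup>*" by (simp add: reach_def)
  qed
qed

lemma del_ind: "del_vertex (ind H S) c = ind H (S - {c})"
  by (auto simp: del_vertex_def ind_def)

lemma H_ind: "wf_graph H \<Longrightarrow> ind H (verts H) = H"
  by (cases H) (auto simp: wf_graph_def ind_def)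

lemma sub_ind: "wf_graph H \<Longrightarrow> S \<subseteq> verts H \<Longrightarrow> subgraph (ind H S) H"
  by (auto simp: subgraph_def wf_graph_def ind_def intro: finite_subset)

lemma crit:
  assumes "S \<noteq> {}" "conn H S" "\<And>c. c \<in> S \<Longrightarrow> S - {c} = {} \<or> conn H (S - {c})"
  shows "biconn_piece (ind H S)"
  unfolding biconn_piece_def
proof
  show "connected_graph (ind H S)"
    using assms(1,2) by (simp add: connected_graph_def conn_def ind_def)
  show "\<forall>v. \<not> cut_vertex (ind H S) v"
  proof
    fix c
    show "\<not> cut_vertex (ind H S) c"
    proof
      assume cv: "cut_vertex (ind H S) c"
      then have c: "c \<in> S" by (simp add: cut_vertex_def ind_def)
      have "ncomp (ind H (S - {c})) \<le> 1"
      proof (cases "S - {c} = {}")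
        case True then show ?thesis using ncomp_empty by (metis le_numeral_extra(1) zero_le)
      next
        case False then show ?thesis using assms(3)[OF c] ncomp_conn by (metis order_refl)
      qed
      then show False using cv ncomp_conn[OF assms(1,2)] by (simp add: cut_vertex_def del_ind)
    qed
  qed
qed
lemma block_sub: "is_block H B \<Longrightarrow> subgraph B H" by (simp add: is_block_def)

lemma block_edge: assumes "is_block H B" "complete B" "u \<in> verts B" "w \<in> verts B" "u \<noteq> w"
  shows "{u, w} \<in> edges H"
proof -
  have "{u, w} \<in> edges B" using assms(2-5) by (simp add: complete_def)
  then show ?thesis using assms(1) by (auto simp: is_block_def subgraph_def)
qed

lemma block_ind_le: assumes "is_block H B" "verts B \<subseteq> S"
  shows "edges B \<subseteq> edges (ind H S)"
  using assms by (auto simp: is_block_def subgraph_def wf_graph_def ind_def)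

lemma two_blocks:
  assumes wf: "wf_graph H" and b1: "is_block H B1" and b2: "is_block H B2"
    and c1: "complete B1" and c2: "complete B2" and uw: "u \<noteq> w"
    and u1: "u \<in> verts B1" and w1: "w \<in> verts B1" and u2: "u \<in> verts B2" and w2: "w \<in> verts B2"
  shows "B1 = B2"
proof -
  let ?S = "verts B1 \<union> verts B2"
  have SV: "?S \<subseteq> verts H" using b1 b2 by (auto simp: is_block_def subgraph_def)
  have hubS: "conn H T" if "s \<in> verts B1" "s \<in> verts B2" "T \<subseteq> ?S" "s \<in> T" for s T
  proof (rule hub[OF that(4)])
    fix t assume "t \<in> T"
    then show "t = s \<or> {s, t} \<in> edges H"
      using that block_edge[OF b1 c1] block_edge[OF b2 c2] by blast
  qed
  have bp: "biconn_piece (ind H ?S)"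
  proof (rule crit)
    show "?S \<noteq> {}" using u1 by auto
    show "conn H ?S" using hubS[OF u1 u2] u1 by auto
    fix c assume "c \<in> ?S"
    show "?S - {c} = {} \<or> conn H (?S - {c})"
    proof (cases "c = u")
      case True then show ?thesis using hubS[OF w1 w2, of "?S - {c}"] uw w1 by auto
    next
      case False then show ?thesis using hubS[OF u1 u2, of "?S - {c}"] u1 by auto
    qed
  qed
  have sg: "subgraph (ind H ?S) H" using sub_ind[OF wf SV] .
  have "ind H ?S = B1"
    using b1 sg bp block_ind_le[OF b1, of ?S] unfolding is_block_def by (auto simp: ind_def)
  moreover have "ind H ?S = B2"
    using b2 sg bp block_ind_le[OF b2, of ?S] unfolding is_block_def by (auto simp: ind_def)
  ultimately show ?thesis by simp
qed

lemma finite_subgraphs: assumes "wf_graph H" shows "finite {B. subgraph B H}"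
proof -
  have fe: "finite (edges H)"
  proof -
    have "edges H \<subseteq> Pow (verts H)" using assms by (auto simp: wf_graph_def)
    then show ?thesis using assms finite_subset by (auto simp: wf_graph_def)
  qed
  have "{B. subgraph B H} \<subseteq> Pow (verts H) \<times> Pow (edges H)"
    by (auto simp: subgraph_def)
  moreover have "finite (Pow (verts H) \<times> Pow (edges H))" using fe assms by (simp add: wf_graph_def)
  ultimately show ?thesis by (rule finite_subset)
qed

lemma block_above:
  assumes wf: "wf_graph H" and sg: "subgraph B0 H" and bp: "biconn_piece B0"
  shows "\<exists>B. is_block H B \<and> verts B0 \<subseteq> verts B \<and> edges B0 \<subseteq> edges B"
proof -
  define P where "P B \<longleftrightarrow> subgraph B H \<and> biconn_piece B \<and> verts B0 \<subseteq> verts B \<and> edges B0 \<subseteq> edges B" for B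
  have "P B0" using sg bp by (simp add: P_def)
  then obtain B where PB: "P B" and mx: "\<And>B'. P B' \<Longrightarrow> card (verts B') + card (edges B') \<le> card (verts B) + card (edges B)"
  proof -
    have fin: "finite {B. P B}" using finite_subgraphs[OF wf] by (rule finite_subset[rotated]) (auto simp: P_def)
    let ?m = "\<lambda>B. card (verts B) + card (edges B)"
    have ne: "{B. P B} \<noteq> {}" using \<open>P B0\<close> by (metis empty_Collect_eq)
    obtain B where "B \<in> {B. P B}" "?m B = Max (?m ` {B. P B})"
      using Max_in[of "?m ` {B. P B}"] fin ne by (metis (no_types, lifting) empty_is_image finite_imageI imageE)
    moreover have "\<And>B'. P B' \<Longrightarrow> ?m B' \<le> Max (?m ` {B. P B})" using fin by simp
    ultimately show ?thesis using that by auto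
  qed
  have fV: "finite (verts B')" "finite (edges B')" if "subgraph B' H" for B'
  proof -
    show "finite (verts B')" using that wf by (auto simp: subgraph_def wf_graph_def intro: finite_subset)
    have "edges B' \<subseteq> Pow (verts B')" using that by (auto simp: subgraph_def wf_graph_def)
    then show "finite (edges B')" using \<open>finite (verts B')\<close> finite_subset by auto
  qed
  have "is_block H B"
    unfolding is_block_def
  proof (intro conjI allI impI)
    show "subgraph B H" "biconn_piece B" using PB by (auto simp: P_def)
    fix B' assume h: "subgraph B' H \<and> biconn_piece B' \<and> verts B \<subseteq> verts B' \<and> edges B \<subseteq> edges B'"
    then have "P B'" using PB by (auto simp: P_def)
    then have le: "card (verts B') + card (edges B') \<le> card (verts B) + card (edges B)" by (rule mx)
    have c1: "card (verts B) \<le> card (verts B')" using h fV[of B'] card_mono by blast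
    have c2: "card (edges B) \<le> card (edges B')" using h fV[of B'] card_mono by blast
    have e1: "card (verts B) = card (verts B')" and e2: "card (edges B) = card (edges B')"
      using c1 c2 le by linarith+
    have "verts B = verts B'" using h fV[of B'] e1 card_subset_eq by blast
    moreover have "edges B = edges B'" using h fV[of B'] e2 card_subset_eq by blast
    ultimately show "B' = B" by (simp add: prod_eq_iff)
  qed
  then show ?thesis using PB unfolding P_def by blast
qed

lemma ind_block:
  assumes wf: "wf_graph H" and SV: "S \<subseteq> verts H" and ne: "S \<noteq> {}" and cS: "conn H S"
    and cc: "\<And>c. c \<in> S \<Longrightarrow> S - {c} = {} \<or> conn H (S - {c})"
  shows "\<exists>B. is_block H B \<and> S \<subseteq> verts B"
  using block_above[OF wf sub_ind[OF wf SV] crit[OF ne cS cc]] by (auto simp: ind_def)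

lemma clique_block:
  assumes wf: "wf_graph H" and SV: "S \<subseteq> verts H" and ne: "S \<noteq> {}"
    and cl: "\<And>u w. u \<in> S \<Longrightarrow> w \<in> S \<Longrightarrow> u \<noteq> w \<Longrightarrow> {u, w} \<in> edges H"
  shows "\<exists>B. is_block H B \<and> S \<subseteq> verts B"
proof (rule ind_block[OF wf SV ne])
  obtain s where s: "s \<in> S" using ne by auto
  show "conn H S" using hub[OF s] cl s by blast
  fix c assume "c \<in> S"
  show "S - {c} = {} \<or> conn H (S - {c})"
  proof (cases "S - {c} = {}")
    case False
    then obtain t where t: "t \<in> S - {c}" by auto
    have "conn H (S - {c})" using hub[OF t] cl t by blast
    then show ?thesis by simp
  qed simp
qed
lemma min_sep:
  assumes TV: "T \<subseteq> V'" and fin: "finite V'" and zT: "z \<in> T" and bT: "b \<in> T" and cT: "conn H T"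
    and mn: "\<And>T'. T' \<subseteq> V' \<and> z \<in> T' \<and> b \<in> T' \<and> conn H T' \<Longrightarrow> card T \<le> card T'"
    and c: "c \<in> T" and u: "u \<in> T - {c}"
  shows "(u, z) \<in> (adj (ind H (T - {c})))\<^sup>* \<or> (u, b) \<in> (adj (ind H (T - {c})))\<^sup>*"
proof (rule ccontr)
  assume nz: "\<not> ?thesis"
  define C where "C = {w. (u, w) \<in> (adj (ind H (T - {c})))\<^sup>*}"
  define T' where "T' = T - C"
  have CT: "C \<subseteq> T - {c}" unfolding C_def using reach_in[of u _ H "T - {c}"] u by blast
  have uC: "u \<in> C" by (simp add: C_def)
  have zb: "z \<notin> C" "b \<notin> C" using nz by (auto simp: C_def)
  have cT': "c \<in> T'" using CT c by (auto simp: T'_def)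
  have key: "(w0, w) \<in> (adj (ind H T'))\<^sup>* \<or> (w0, c) \<in> (adj (ind H T'))\<^sup>*"
    if w0: "w0 \<in> T'" and p: "(w0, w) \<in> (adj (ind H T))\<^sup>*" for w0 w
    using p
  proof (induction rule: rtrancl_induct)
    case base then show ?case by simp
  next
    case (step y z')
    show ?case
    proof (cases "(w0, c) \<in> (adj (ind H T'))\<^sup>*")
      case False
      then have wy: "(w0, y) \<in> (adj (ind H T'))\<^sup>*" using step.IH by simp
      then have yT': "y \<in> T'" using reach_in w0 by metis
      have e: "{y, z'} \<in> edges H" "z' \<in> T" using step.hyps(2) by (auto simp: adj_ind)
      show ?thesis
      proof (cases "z' \<in> T'")
        case True
        then have "(y, z') \<in> adj (ind H T')" using e yT' by (simp add: adj_ind)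
        then show ?thesis using wy by (meson rtrancl.rtrancl_into_rtrancl)
      next
        case False
        then have z'C: "z' \<in> C" using e by (auto simp: T'_def)
        show ?thesis
        proof (cases "y = c")
          case True then show ?thesis using wy by simp
        next
          case yc: False
          have "y \<in> T - {c}" using yT' yc by (auto simp: T'_def)
          moreover have "z' \<in> T - {c}" using z'C CT by auto
          ultimately have "(z', y) \<in> adj (ind H (T - {c}))" using e by (simp add: adj_ind insert_commute)
          then have "y \<in> C" using z'C by (auto simp: C_def intro: rtrancl_into_rtrancl)
          then show ?thesis using yT' by (auto simp: T'_def)
        qed
      qed
    qed simp
  qed
  have cT'': "conn H T'"
  proof (rule conn_root[OF cT'])
    fix w assume w: "w \<in> T'"
    then have "(w, c) \<in> (adj (ind H T))\<^sup>*" using cT c by (auto simp: conn_def T'_def)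
    then show "(w, c) \<in> (adj (ind H T'))\<^sup>*" using key[OF w] by blast
  qed
  have "T' \<subseteq> V' \<and> z \<in> T' \<and> b \<in> T' \<and> conn H T'" using TV zT bT zb cT'' by (auto simp: T'_def)
  then have "card T \<le> card T'" by (rule mn)
  moreover have "card T' < card T"
  proof (rule psubset_card_mono)
    show "finite T" using TV fin finite_subset by auto
    show "T' \<subset> T" using uC u by (auto simp: T'_def)
  qed
  ultimately show False by simp
qed

lemma nc_nbr:
  assumes wf: "wf_graph H" and cH: "connected_graph H" and bg: "block_graph H"
    and B: "is_block H B" and p: "p \<in> verts B" and z: "z \<in> verts B" and zp: "z \<noteq> p"
    and nc: "\<not> cut_vertex H p" and pb: "{p, b} \<in> edges H"
  shows "b \<in> verts B"
proof -
  define V' where "V' = verts H - {p}"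
  have cB: "complete B" using bg B unfolding block_graph_def by blast
  have pV: "p \<in> verts H" and zV: "z \<in> verts H" using B p z by (auto simp: is_block_def subgraph_def)
  have finV: "finite (verts H)" using wf by (simp add: wf_graph_def)
  have bV: "b \<in> verts H" and bp: "b \<noteq> p" using wf pb by (auto simp: wf_graph_def)
  have nH: "ncomp H = 1"
  proof -
    have "conn H (verts H)" using cH by (simp add: conn_def connected_graph_def H_ind[OF wf])
    then show ?thesis using ncomp_conn[of "verts H" H] pV by (auto simp: H_ind[OF wf])
  qed
  have "ncomp (ind H V') \<le> 1"
    using nc pV nH by (simp add: cut_vertex_def V'_def del_ind[symmetric] H_ind[OF wf])
  then have cV': "conn H V'" using ncomp_le1_conn[of V' H] finV zV zp by (auto simp: V'_def)
  have P0: "V' \<subseteq> V' \<and> z \<in> V' \<and> b \<in> V' \<and> conn H V'" using cV' zV zp bV bp by (auto simp: V'_def)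
  obtain T where PT: "T \<subseteq> V' \<and> z \<in> T \<and> b \<in> T \<and> conn H T"
    and mn: "\<And>T'. T' \<subseteq> V' \<and> z \<in> T' \<and> b \<in> T' \<and> conn H T' \<Longrightarrow> card T \<le> card T'"
    using ex_has_least_nat[of "\<lambda>T. T \<subseteq> V' \<and> z \<in> T \<and> b \<in> T \<and> conn H T" V' card, OF P0] by blast
  have finV': "finite V'" using finV by (simp add: V'_def)
  have pT: "p \<notin> T" using PT by (auto simp: V'_def)
  have ezp: "{z, p} \<in> edges H" using block_edge[OF B cB z p zp] .
  have ebp: "{b, p} \<in> edges H" using pb by (simp add: insert_commute)
  define S where "S = insert p T"
  have SV: "S \<subseteq> verts H" using PT pV by (auto simp: S_def V'_def)
  have toP: "(u, p) \<in> (adj (ind H U))\<^sup>*"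
    if "(u, t) \<in> (adj (ind H W))\<^sup>*" "W \<subseteq> U" "t \<in> U" "p \<in> U" "{t, p} \<in> edges H" for u t W U
  proof -
    have "(u, t) \<in> (adj (ind H U))\<^sup>*" using rt_mono that by metis
    moreover have "(t, p) \<in> adj (ind H U)" using that by (simp add: adj_ind)
    ultimately show ?thesis by (rule rtrancl_into_rtrancl)
  qed
  have cS: "conn H S"
  proof (rule conn_root[of p])
    show "p \<in> S" by (simp add: S_def)
    fix u assume "u \<in> S"
    show "(u, p) \<in> (adj (ind H S))\<^sup>*"
    proof (cases "u = p")
      case False
      then have "u \<in> T" using \<open>u \<in> S\<close> by (simp add: S_def)
      then have "(u, z) \<in> (adj (ind H T))\<^sup>*" using PT by (simp add: conn_def)
      then show ?thesis using toP[of u z T S] PT ezp by (auto simp: S_def)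
    qed simp
  qed
  have cc: "S - {c} = {} \<or> conn H (S - {c})" if c: "c \<in> S" for c
  proof (cases "c = p")
    case True
    then have "S - {c} = T" using pT by (auto simp: S_def)
    then show ?thesis using PT by simp
  next
    case False
    then have cT: "c \<in> T" using c by (simp add: S_def)
    have "conn H (S - {c})"
    proof (rule conn_root[of p])
      show "p \<in> S - {c}" using False by (simp add: S_def)
      fix u assume u: "u \<in> S - {c}"
      show "(u, p) \<in> (adj (ind H (S - {c})))\<^sup>*"
      proof (cases "u = p")
        case False
        then have uT: "u \<in> T - {c}" using u by (auto simp: S_def)
        have sub: "T - {c} \<subseteq> S - {c}" by (auto simp: S_def)
        have pin: "p \<in> S - {c}" using \<open>c \<noteq> p\<close> by (simp add: S_def)
        from min_sep[OF _ finV' _ _ _ mn cT uT] PT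
        have "(u, z) \<in> (adj (ind H (T - {c})))\<^sup>* \<or> (u, b) \<in> (adj (ind H (T - {c})))\<^sup>*" by blast
        then show ?thesis
        proof
          assume h: "(u, z) \<in> (adj (ind H (T - {c})))\<^sup>*"
          then have "z \<in> T - {c}" using reach_in uT by metis
          then show ?thesis using toP[OF h sub _ pin ezp] sub by auto
        next
          assume h: "(u, b) \<in> (adj (ind H (T - {c})))\<^sup>*"
          then have "b \<in> T - {c}" using reach_in uT by metis
          then show ?thesis using toP[OF h sub _ pin ebp] sub by auto
        qed
      qed simp
    qed
    then show ?thesis by simp
  qed
  obtain B' where B': "is_block H B'" and SB': "S \<subseteq> verts B'"
    using ind_block[OF wf SV _ cS cc] by (auto simp: S_def)
  have cB': "complete B'" using bg B' unfolding block_graph_def by blast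
  have "B' = B"
    using two_blocks[OF wf B' B cB' cB zp] SB' PT p z by (auto simp: S_def)
  then show ?thesis using SB' PT by (auto simp: S_def)
qed


lemma no2K2:
  assumes ci: "co_interval K" and V: "u1 \<in> verts K" "u2 \<in> verts K" "w1 \<in> verts K" "w2 \<in> verts K"
    and d: "u1 \<noteq> u2" "w1 \<noteq> w2" "u1 \<noteq> w1" "u1 \<noteq> w2" "u2 \<noteq> w1" "u2 \<noteq> w2"
    and e: "{u1, u2} \<in> edges K" "{w1, w2} \<in> edges K"
    and n: "{u1, w1} \<notin> edges K" "{u1, w2} \<notin> edges K" "{u2, w1} \<notin> edges K" "{u2, w2} \<notin> edges K"
  shows False
proof -
  obtain f :: "'a \<Rightarrow> real \<times> real" where
    f2: "\<forall>u\<in>verts K. \<forall>w\<in>verts K. u \<noteq> w \<longrightarrow>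
        ({u, w} \<in> edges K \<longleftrightarrow> snd (f u) < fst (f w) \<or> snd (f w) < fst (f u))"
    using ci unfolding co_interval_def by blast
  note F = f2[rule_format]
  have "snd (f u1) < fst (f u2) \<or> snd (f u2) < fst (f u1)" using F[OF V(1,2) d(1)] e by simp
  moreover have "snd (f w1) < fst (f w2) \<or> snd (f w2) < fst (f w1)" using F[OF V(3,4) d(2)] e by simp
  moreover have "\<not> (snd (f u1) < fst (f w1) \<or> snd (f w1) < fst (f u1))" using F[OF V(1,3) d(3)] n by simp
  moreover have "\<not> (snd (f u1) < fst (f w2) \<or> snd (f w2) < fst (f u1))" using F[OF V(1,4) d(4)] n by simp
  moreover have "\<not> (snd (f u2) < fst (f w1) \<or> snd (f w1) < fst (f u2))" using F[OF V(2,3) d(5)] n by simp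
  moreover have "\<not> (snd (f u2) < fst (f w2) \<or> snd (f w2) < fst (f u2))" using F[OF V(2,4) d(6)] n by simp
  ultimately show False by linarith
qed

lemma no_net:
  assumes ci: "co_interval K" and V: "t1 \<in> verts K" "t2 \<in> verts K" "t3 \<in> verts K" "s1 \<in> verts K" "s2 \<in> verts K" "s3 \<in> verts K"
    and d: "t1 \<noteq> t2" "t1 \<noteq> t3" "t2 \<noteq> t3" "s1 \<noteq> t1" "s1 \<noteq> t2" "s1 \<noteq> t3"
       "s2 \<noteq> t1" "s2 \<noteq> t2" "s2 \<noteq> t3" "s3 \<noteq> t1" "s3 \<noteq> t2" "s3 \<noteq> t3"
    and e: "{t1, t2} \<in> edges K" "{t1, t3} \<in> edges K" "{t2, t3} \<in> edges K"
       "{t1, s1} \<in> edges K" "{t2, s2} \<in> edges K" "{t3, s3} \<in> edges K"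
    and n: "{s1, t2} \<notin> edges K" "{s1, t3} \<notin> edges K" "{s2, t1} \<notin> edges K" "{s2, t3} \<notin> edges K"
       "{s3, t1} \<notin> edges K" "{s3, t2} \<notin> edges K"
  shows False
proof -
  obtain f :: "'a \<Rightarrow> real \<times> real" where
    f1: "\<forall>v\<in>verts K. fst (f v) \<le> snd (f v)" and
    f2: "\<forall>u\<in>verts K. \<forall>w\<in>verts K. u \<noteq> w \<longrightarrow>
        ({u, w} \<in> edges K \<longleftrightarrow> snd (f u) < fst (f w) \<or> snd (f w) < fst (f u))"
    using ci unfolding co_interval_def by blast
  note F = f2[rule_format]
  have l: "fst (f t1) \<le> snd (f t1)" "fst (f t2) \<le> snd (f t2)" "fst (f t3) \<le> snd (f t3)" using f1 V by auto
  have "snd (f t1) < fst (f t2) \<or> snd (f t2) < fst (f t1)" using F[OF V(1,2) d(1)] e by simp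
  moreover have "snd (f t1) < fst (f t3) \<or> snd (f t3) < fst (f t1)" using F[OF V(1,3) d(2)] e by simp
  moreover have "snd (f t2) < fst (f t3) \<or> snd (f t3) < fst (f t2)" using F[OF V(2,3) d(3)] e by simp
  moreover have "snd (f t1) < fst (f s1) \<or> snd (f s1) < fst (f t1)" using F[OF V(1,4) d(4)[symmetric]] e by simp
  moreover have "snd (f t2) < fst (f s2) \<or> snd (f s2) < fst (f t2)" using F[OF V(2,5) d(8)[symmetric]] e by simp
  moreover have "snd (f t3) < fst (f s3) \<or> snd (f s3) < fst (f t3)" using F[OF V(3,6) d(12)[symmetric]] e by simp
  moreover have "\<not> (snd (f s1) < fst (f t2) \<or> snd (f t2) < fst (f s1))" using F[OF V(4,2) d(5)] n by simp
  moreover have "\<not> (snd (f s1) < fst (f t3) \<or> snd (f t3) < fst (f s1))" using F[OF V(4,3) d(6)] n by simp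
  moreover have "\<not> (snd (f s2) < fst (f t1) \<or> snd (f t1) < fst (f s2))" using F[OF V(5,1) d(7)] n by simp
  moreover have "\<not> (snd (f s2) < fst (f t3) \<or> snd (f t3) < fst (f s2))" using F[OF V(5,3) d(9)] n by simp
  moreover have "\<not> (snd (f s3) < fst (f t1) \<or> snd (f t1) < fst (f s3))" using F[OF V(6,1) d(10)] n by simp
  moreover have "\<not> (snd (f s3) < fst (f t2) \<or> snd (f t2) < fst (f s3))" using F[OF V(6,2) d(11)] n by simp
  ultimately show False using l by linarith
qed

lemma no_C5:
  assumes ci: "co_interval K" and V: "v1 \<in> verts K" "v2 \<in> verts K" "v3 \<in> verts K" "v4 \<in> verts K" "v5 \<in> verts K"
    and d: "v1 \<noteq> v2" "v2 \<noteq> v3" "v3 \<noteq> v4" "v4 \<noteq> v5" "v5 \<noteq> v1"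
       "v1 \<noteq> v3" "v1 \<noteq> v4" "v2 \<noteq> v4" "v2 \<noteq> v5" "v3 \<noteq> v5"
    and e: "{v1, v2} \<in> edges K" "{v2, v3} \<in> edges K" "{v3, v4} \<in> edges K" "{v4, v5} \<in> edges K" "{v5, v1} \<in> edges K"
    and n: "{v1, v3} \<notin> edges K" "{v1, v4} \<notin> edges K" "{v2, v4} \<notin> edges K" "{v2, v5} \<notin> edges K" "{v3, v5} \<notin> edges K"
  shows False
proof -
  obtain f :: "'a \<Rightarrow> real \<times> real" where
    f1: "\<forall>v\<in>verts K. fst (f v) \<le> snd (f v)" and
    f2: "\<forall>u\<in>verts K. \<forall>w\<in>verts K. u \<noteq> w \<longrightarrow>
        ({u, w} \<in> edges K \<longleftrightarrow> snd (f u) < fst (f w) \<or> snd (f w) < fst (f u))"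
    using ci unfolding co_interval_def by blast
  note F = f2[rule_format]
  have l: "fst (f v1) \<le> snd (f v1)" "fst (f v2) \<le> snd (f v2)" "fst (f v3) \<le> snd (f v3)"
     "fst (f v4) \<le> snd (f v4)" "fst (f v5) \<le> snd (f v5)" using f1 V by auto
  have "snd (f v1) < fst (f v2) \<or> snd (f v2) < fst (f v1)" using F[OF V(1,2) d(1)] e by simp
  moreover have "snd (f v2) < fst (f v3) \<or> snd (f v3) < fst (f v2)" using F[OF V(2,3) d(2)] e by simp
  moreover have "snd (f v3) < fst (f v4) \<or> snd (f v4) < fst (f v3)" using F[OF V(3,4) d(3)] e by simp
  moreover have "snd (f v4) < fst (f v5) \<or> snd (f v5) < fst (f v4)" using F[OF V(4,5) d(4)] e by simp
  moreover have "snd (f v5) < fst (f v1) \<or> snd (f v1) < fst (f v5)" using F[OF V(5,1) d(5)] e by simp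
  moreover have "\<not> (snd (f v1) < fst (f v3) \<or> snd (f v3) < fst (f v1))" using F[OF V(1,3) d(6)] n by simp
  moreover have "\<not> (snd (f v1) < fst (f v4) \<or> snd (f v4) < fst (f v1))" using F[OF V(1,4) d(7)] n by simp
  moreover have "\<not> (snd (f v2) < fst (f v4) \<or> snd (f v4) < fst (f v2))" using F[OF V(2,4) d(8)] n by simp
  moreover have "\<not> (snd (f v2) < fst (f v5) \<or> snd (f v5) < fst (f v2))" using F[OF V(2,5) d(9)] n by simp
  moreover have "\<not> (snd (f v3) < fst (f v5) \<or> snd (f v5) < fst (f v3))" using F[OF V(3,5) d(10)] n by simp
  ultimately show False using l by linarith
qed


lemma ba_edge:
  assumes wf: "wf_graph H" and cQ: "complete Q" and uw: "u \<noteq> w"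
  shows "{u, w} \<in> edges (big_ant H Q x y) \<longleftrightarrow>
    (u \<in> verts Q \<and> w \<in> verts Q) \<or> ({u, w} \<in> edges H \<and> (u = x \<or> w = x \<or> u = y \<or> w = y))"
  using cQ uw by (auto simp: big_ant_def complete_def delta_def)

lemma ba_coint:
  assumes wf: "wf_graph H" and fQ: "finite (verts Q)" and cQ: "complete Q"
    and xQ: "x \<in> verts Q" and yQ: "y \<in> verts Q"
    and xy: "y \<noteq> x \<Longrightarrow> \<forall>w. {x, w} \<in> edges H \<longrightarrow> {y, w} \<in> edges H \<longrightarrow> w \<in> verts Q"
  shows "co_interval (big_ant H Q x y)"
proof -
  define W where "W = verts Q - {x, y}"
  obtain g N where gW: "g ` W = {i::nat. i < N}" and ginj: "inj_on g W"
    using finite_imp_inj_to_nat_seg[of W] fQ by (auto simp: W_def)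
  have gN: "g w < N" if "w \<in> W" for w using gW that by auto
  have gi: "g u \<noteq> g w" if "u \<in> W" "w \<in> W" "u \<noteq> w" for u w using ginj that by (meson inj_onD)
  define f :: "'a \<Rightarrow> real \<times> real" where "f u = (if u = x then (0, 0) else if u = y then (real N + 1, real N + 1)
     else if u \<in> verts Q then (real (g u) + 1, real (g u) + 1)
     else if {x, u} \<in> edges H then (1/2, real N + 2) else (-1, real N + 1/2))" for u
  have ne: "a \<noteq> b" if "{a, b} \<in> edges H" for a b
    using wf that by (auto simp: wf_graph_def)
  have vs: "verts (big_ant H Q x y) = verts Q \<union> {w. {x, w} \<in> edges H} \<union> {w. {y, w} \<in> edges H}"
    by (simp add: big_ant_def nbhd_def)
  have fx: "f x = (0, 0)" by (simp add: f_def)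
  have fy: "y \<noteq> x \<Longrightarrow> f y = (real N + 1, real N + 1)" by (simp add: f_def)
  have fW: "u \<in> W \<Longrightarrow> f u = (real (g u) + 1, real (g u) + 1)" for u by (simp add: f_def W_def)
  have fA: "u \<notin> verts Q \<Longrightarrow> {x, u} \<in> edges H \<Longrightarrow> f u = (1/2, real N + 2)" for u
    using xQ yQ by (auto simp: f_def)
  have fB: "u \<notin> verts Q \<Longrightarrow> {x, u} \<notin> edges H \<Longrightarrow> f u = (-1, real N + 1/2)" for u
    using xQ yQ by (auto simp: f_def)
  have gN': "real (g u) + 1 \<le> real N" if "u \<in> W" for u using gN[OF that] by linarith
  have gi': "real (g u) < real (g w) \<or> real (g w) < real (g u)" if "u \<in> W" "w \<in> W" "u \<noteq> w" for u w
    using gi[OF that] by linarith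
  have cat: "u = x \<or> (u = y \<and> y \<noteq> x) \<or> u \<in> W \<or> (u \<notin> verts Q \<and> {x, u} \<in> edges H)
     \<or> (u \<notin> verts Q \<and> {x, u} \<notin> edges H \<and> {y, u} \<in> edges H \<and> y \<noteq> x)"
    if "u \<in> verts (big_ant H Q x y)" for u
    using that by (auto simp: vs W_def)
  have WQ: "u \<in> W \<Longrightarrow> u \<in> verts Q \<and> u \<noteq> x \<and> u \<noteq> y" for u by (simp add: W_def)
  have Ax: "{x, u} \<in> edges H \<Longrightarrow> u \<notin> verts Q \<Longrightarrow> y \<noteq> x \<Longrightarrow> {y, u} \<notin> edges H" for u
    using xy by blast
  have Ax2: "{u, x} \<in> edges H \<Longrightarrow> u \<notin> verts Q \<Longrightarrow> y \<noteq> x \<Longrightarrow> {u, y} \<in> edges H \<Longrightarrow> False" for u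
    using xy by (metis insert_commute)
  show ?thesis
    unfolding co_interval_def
  proof (intro exI[of _ f] conjI ballI impI)
    fix v show "fst (f v) \<le> snd (f v)" by (simp add: f_def)
  next
    fix u w assume u: "u \<in> verts (big_ant H Q x y)" and w: "w \<in> verts (big_ant H Q x y)" and uw: "u \<noteq> w"
    show "{u, w} \<in> edges (big_ant H Q x y) \<longleftrightarrow> snd (f u) < fst (f w) \<or> snd (f w) < fst (f u)"
      unfolding ba_edge[OF wf cQ uw]
      using cat[OF u] cat[OF w] uw xQ yQ
      apply (elim disjE)
      apply (auto simp: fx fy fW fA fB insert_commute dest: WQ Ax gN' gi' ne Ax2)
      done
  qed
qed

theorem mainTheorem9:
  fixes H Q L K :: "'a graph" and v x :: 'a
  assumes "wf_graph H" and "connected_graph H" and "pointed H" and "block_graph H"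
    and "near_leaf_block H Q"
    and "v \<in> verts Q" and "cut_vertex H v"
    and "(\<exists>c. is_anchor H Q c) \<longrightarrow> is_anchor H Q v"
    and "x \<in> verts Q" and "cut_vertex H x" and "x \<noteq> v"
    and "leaf_block H L" and "block_nbr H Q L" and "x \<in> verts L"
    and "max_co_interval_subgraph H K" and "edges L \<subseteq> edges K"
  shows "\<exists>y\<in>verts Q. edges K = edges (big_ant H Q x y)"
proof -
  note wf = assms(1) and cH = assms(2) and pt = assms(3) and bg = assms(4) and nl = assms(5)
    and vQ = assms(6) and anc = assms(8) and xQ = assms(9) and cx = assms(10) and xv = assms(11)
    and lL = assms(12) and nbr = assms(13) and xL = assms(14) and mK = assms(15) and LK = assms(16)
  have Qb: "is_block H Q" using nl by (simp add: near_leaf_block_def internal_block_def)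
  have cpl: "complete B" if "is_block H B" for B using bg that unfolding block_graph_def by blast
  have cQ: "complete Q" using cpl[OF Qb] .
  have Lb: "is_block H L" using lL by (simp add: leaf_block_def)
  have cL: "complete L" using cpl[OF Lb] .
  have QL: "Q \<noteq> L" using nbr by (simp add: block_nbr_def)
  have finB: "finite (verts B)" if "is_block H B" for B
    using that wf by (auto simp: is_block_def subgraph_def wf_graph_def)
  have BV: "verts B \<subseteq> verts H" if "is_block H B" for B
    using that by (auto simp: is_block_def subgraph_def)
  have fQ: "finite (verts Q)" using finB[OF Qb] .
  have ne: "a \<noteq> b" if "{a, b} \<in> edges H" for a b
    using wf that by (auto simp: wf_graph_def)
  have EV: "a \<in> verts H" "b \<in> verts H" if "{a, b} \<in> edges H" for a b
    using wf that by (auto simp: wf_graph_def)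
  have Ksub: "subgraph K H" and ciK: "co_interval K"
    and Kmax: "\<not> (\<exists>K'. subgraph K' H \<and> co_interval K' \<and> edges K \<subset> edges K')"
    using mK by (auto simp: max_co_interval_subgraph_def)
  have KH: "e \<in> edges H" if "e \<in> edges K" for e using Ksub that by (auto simp: subgraph_def)
  have KV: "a \<in> verts K" "b \<in> verts K" if "{a, b} \<in> edges K" for a b
    using Ksub that by (auto simp: subgraph_def wf_graph_def)
  have inQ: "t \<in> verts Q" if u: "u \<in> verts Q" and w: "w \<in> verts Q" and uw: "u \<noteq> w"
     and ut: "{u, t} \<in> edges H" and wt: "{w, t} \<in> edges H" for u w t
  proof -
    have tu: "t \<noteq> u" and tw: "t \<noteq> w" using ne ut wt by auto
    have euw: "{u, w} \<in> edges H" using block_edge[OF Qb cQ u w uw] .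
    have SV: "{u, w, t} \<subseteq> verts H" using BV[OF Qb] u w EV[OF ut] by auto
    have cl: "{a, b} \<in> edges H" if "a \<in> {u, w, t}" "b \<in> {u, w, t}" "a \<noteq> b" for a b
      using that euw ut wt by (auto simp: insert_commute)
    obtain B where B: "is_block H B" and SB: "{u, w, t} \<subseteq> verts B"
      using clique_block[OF wf SV _ cl] by blast
    have "B = Q" using two_blocks[OF wf B Qb cpl[OF B] cQ uw] SB u w by auto
    then show ?thesis using SB by auto
  qed
  have leafnbr: "b = x" if xp: "{x, p} \<in> edges H" and pQ: "p \<notin> verts Q" and pb: "{p, b} \<in> edges H" for p b
  proof -
    have SV: "{x, p} \<subseteq> verts H" using EV[OF xp] by auto
    have cl: "{a, b} \<in> edges H" if "a \<in> {x, p}" "b \<in> {x, p}" "a \<noteq> b" for a b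
      using that xp by (auto simp: insert_commute)
    obtain B where B: "is_block H B" and SB: "{x, p} \<subseteq> verts B"
      using clique_block[OF wf SV _ cl] by blast
    have BQ: "B \<noteq> Q" using SB pQ by auto
    have bn: "block_nbr H Q B" using Qb B BQ SB xQ by (auto simp: block_nbr_def)
    have ni: "\<not> internal_block H B"
    proof
      assume ib: "internal_block H B"
      from nl have "(\<forall>B. block_nbr H Q B \<longrightarrow> leaf_block H B) \<or> (\<exists>c. is_anchor H Q c)"
        unfolding near_leaf_block_def by blast
      then show False
      proof
        assume "\<forall>B. block_nbr H Q B \<longrightarrow> leaf_block H B"
        then have "leaf_block H B" using bn by blast
        then show False using ib by (simp add: leaf_block_def internal_block_def)
      next
        assume "\<exists>c. is_anchor H Q c"
        then have "is_anchor H Q v" using anc by blast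
        then have "v \<in> verts B" using bn ib unfolding is_anchor_def by blast
        then have "B = Q" using two_blocks[OF wf B Qb cpl[OF B] cQ xv] SB xQ vQ by auto
        then show False using BQ by simp
      qed
    qed
    let ?C = "{c \<in> verts B. cut_vertex H c}"
    have finC: "finite ?C" using finB[OF B] by simp
    have xC: "x \<in> ?C" using SB cx by auto
    have "card ?C \<ge> 1" using finC xC by (metis One_nat_def Suc_leI card_gt_0_iff empty_iff)
    moreover have "\<not> card ?C \<ge> 2" using ni B by (simp add: internal_block_def)
    ultimately have c1: "card ?C = 1" by simp
    then have "leaf_block H B" using B by (simp add: leaf_block_def)
    then have "edge_block H B" using pt unfolding pointed_def by blast
    then have c2: "card (verts B) = 2" by (simp add: edge_block_def)
    have xp': "x \<noteq> p" using ne[OF xp] .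
    have VB: "verts B = {x, p}"
    proof -
      have "card {x, p} = 2" using xp' by simp
      then show ?thesis using SB c2 finB[OF B] by (metis card_subset_eq)
    qed
    have pnc: "\<not> cut_vertex H p"
    proof
      assume "cut_vertex H p"
      then have "{x, p} \<subseteq> ?C" using xC SB by auto
      then have "card {x, p} \<le> card ?C" using finC card_mono by blast
      then show False using c1 xp' by simp
    qed
    have "b \<in> verts B" using nc_nbr[OF wf cH bg B _ _ xp' pnc pb] SB by auto
    then show ?thesis using VB ne[OF pb] by auto
  qed
  obtain a where VL: "verts L = {x, a}" and ax: "a \<noteq> x"
  proof -
    have "edge_block H L" using pt lL unfolding pointed_def by blast
    then have "card (verts L) = 2" by (simp add: edge_block_def)
    then obtain a1 a2 where "verts L = {a1, a2}" "a1 \<noteq> a2" by (meson card_2_iff)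
    then show ?thesis using that xL by (metis doubleton_eq_iff insertE singletonD)
  qed
  have aQ: "a \<notin> verts Q"
  proof
    assume "a \<in> verts Q"
    then have "L = Q" using two_blocks[OF wf Lb Qb cL cQ ax] VL xQ by auto
    then show False using QL by simp
  qed
  have xaH: "{x, a} \<in> edges H" using block_edge[OF Lb cL _ _ ax[symmetric]] VL by auto
  have xaK: "{x, a} \<in> edges K" using cL VL ax LK by (auto simp: complete_def)
  have aN: "b = x" if "{a, b} \<in> edges H" for b using leafnbr[OF xaH aQ that] .
  have aN': "\<not> {a, b} \<in> edges K" if "b \<noteq> x" for b using aN KH that by blast
  have step1: "(p \<in> verts Q \<and> {x, p} \<in> edges K) \<or> (q \<in> verts Q \<and> {x, q} \<in> edges K)"
    if pq: "{p, q} \<in> edges K" and xp: "x \<noteq> p" and xq: "x \<noteq> q" for p q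
  proof -
    have pqH: "{p, q} \<in> edges H" using KH[OF pq] .
    have pq': "p \<noteq> q" using ne[OF pqH] .
    have pa: "p \<noteq> a" using aN pqH xq by blast
    have qa: "q \<noteq> a" using aN pqH xp by (metis insert_commute)
    have "{x, p} \<in> edges K \<or> {x, q} \<in> edges K"
    proof (rule ccontr)
      assume h: "\<not> ?thesis"
      show False
        by (rule no2K2[OF ciK KV(1)[OF xaK] KV(2)[OF xaK] KV(1)[OF pq] KV(2)[OF pq] ax[symmetric] pq' xp xq pa[symmetric] qa[symmetric] xaK pq])
          (use h aN' xp xq in auto)
    qed
    then show ?thesis
    proof
      assume h: "{x, p} \<in> edges K"
      have "p \<in> verts Q" using leafnbr[OF KH[OF h] _ pqH] xq by blast
      then show ?thesis using h by simp
    next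
      assume h: "{x, q} \<in> edges K"
      have "q \<in> verts Q" using leafnbr[OF KH[OF h] _ ] pqH xp by (metis insert_commute)
      then show ?thesis using h by simp
    qed
  qed
  define Py where "Py y \<longleftrightarrow> y \<in> verts Q \<and> y \<noteq> x \<and> {x, y} \<in> edges K \<and> (\<exists>q. q \<notin> verts Q \<and> {y, q} \<in> edges K)" for y
  have uniq: "y1 = y2" if P1: "Py y1" and P2: "Py y2" for y1 y2
  proof (rule ccontr)
    assume d12: "y1 \<noteq> y2"
    obtain q1 where q1: "q1 \<notin> verts Q" "{y1, q1} \<in> edges K" using P1 by (auto simp: Py_def)
    obtain q2 where q2: "q2 \<notin> verts Q" "{y2, q2} \<in> edges K" using P2 by (auto simp: Py_def)
    have y1: "y1 \<in> verts Q" "y1 \<noteq> x" "{x, y1} \<in> edges K" using P1 by (auto simp: Py_def)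
    have y2: "y2 \<in> verts Q" "y2 \<noteq> x" "{x, y2} \<in> edges K" using P2 by (auto simp: Py_def)
    have q1H: "{y1, q1} \<in> edges H" and q2H: "{y2, q2} \<in> edges H" using KH q1 q2 by auto
    have q1a: "q1 \<noteq> a" using aN q1H y1 by (metis insert_commute)
    have q2a: "q2 \<noteq> a" using aN q2H y2 by (metis insert_commute)
    have q12: "q1 \<noteq> q2"
    proof
      assume "q1 = q2"
      then have "q1 \<in> verts Q" using inQ[OF y1(1) y2(1) d12 q1H] q2H by simp
      then show False using q1 by simp
    qed
    have nxq1: "{x, q1} \<notin> edges K" using inQ[OF xQ y1(1) y1(2)[symmetric] _ q1H] q1 KH by blast
    have nxq2: "{x, q2} \<notin> edges K" using inQ[OF xQ y2(1) y2(2)[symmetric] _ q2H] q2 KH by blast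
    have ny1q2: "{y1, q2} \<notin> edges K" using inQ[OF y1(1) y2(1) d12 _ q2H] q2 KH by blast
    have ny2q1: "{y2, q1} \<notin> edges K" using inQ[OF y2(1) y1(1) d12[symmetric] _ q1H] q1 KH by blast
    have nay1: "{a, y1} \<notin> edges K" using aN' y1 by blast
    have nay2: "{a, y2} \<notin> edges K" using aN' y2 by blast
    have d: "x \<noteq> q1" "x \<noteq> q2" "y1 \<noteq> q1" "y1 \<noteq> q2" "y2 \<noteq> q1" "y2 \<noteq> q2" "a \<noteq> y1" "a \<noteq> y2"
      using xQ y1 y2 q1 q2 aQ by auto
    show False
    proof (cases "{y1, y2} \<in> edges K")
      case True
      show False
        by (rule no_net[OF ciK KV(1)[OF y1(3)] KV(2)[OF y1(3)] KV(2)[OF y2(3)] KV(2)[OF xaK] KV(2)[OF q1(2)] KV(2)[OF q2(2)]])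
          (use y1 y2 d12 d q1a q2a ax True xaK q1 q2 nxq1 nxq2 ny1q2 ny2q1 nay1 nay2 in \<open>auto simp: insert_commute\<close>)
    next
      case F: False
      show False
      proof (cases "{q1, q2} \<in> edges K")
        case True
        show False
          by (rule no_C5[OF ciK KV(1)[OF y1(3)] KV(2)[OF y1(3)] KV(2)[OF q1(2)] KV(2)[OF q2(2)] KV(2)[OF y2(3)]])
            (use y1 y2 d12 d q12 True F q1 q2 nxq1 nxq2 ny1q2 ny2q1 in \<open>auto simp: insert_commute\<close>)
      next
        case False
        show False
          by (rule no2K2[OF ciK KV(1)[OF q1(2)] KV(2)[OF q1(2)] KV(1)[OF q2(2)] KV(2)[OF q2(2)]])
            (use y1 y2 d12 d q12 False F q1 q2 ny1q2 ny2q1 in \<open>auto simp: insert_commute\<close>)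
      qed
    qed
  qed
  define y where "y = (if \<exists>y. Py y then (SOME y. Py y) else x)"
  have Pyy: "Py y" if ex: "\<exists>y. Py y"
  proof -
    have "Py (SOME y. Py y)" using ex by (rule someI_ex)
    then show ?thesis using ex unfolding y_def by simp
  qed
  have yQ: "y \<in> verts Q"
  proof (cases "\<exists>y. Py y")
    case True then show ?thesis using Pyy unfolding Py_def by blast
  qed (simp add: y_def xQ)
  have inBA: "{p, q} \<in> edges (big_ant H Q x y)"
    if pq: "{p, q} \<in> edges K" and pQ: "p \<in> verts Q" and px: "p \<noteq> x" and xp: "{x, p} \<in> edges K" for p q
  proof (cases "q \<in> verts Q")
    case True
    have "p \<noteq> q" using ne KH[OF pq] by blast
    then have "{p, q} \<in> edges Q" using cQ True pQ by (simp add: complete_def)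
    then show ?thesis by (simp add: big_ant_def)
  next
    case False
    then have Pp: "Py p" using pQ px xp pq by (auto simp: Py_def)
    then have ex: "\<exists>y. Py y" by blast
    then have "p = y" using uniq[OF Pp] Pyy by blast
    then show ?thesis using KH[OF pq] by (simp add: big_ant_def delta_def)
  qed
  have sub1: "edges K \<subseteq> edges (big_ant H Q x y)"
  proof
    fix e assume e: "e \<in> edges K"
    have eH: "e \<in> edges H" using KH[OF e] .
    then obtain p q where epq: "e = {p, q}" using wf by (auto simp: wf_graph_def card_2_iff)
    show "e \<in> edges (big_ant H Q x y)"
    proof (cases "x \<in> e")
      case True then show ?thesis using eH by (simp add: big_ant_def delta_def)
    next
      case False
      then have "x \<noteq> p" "x \<noteq> q" using epq by auto
      from step1[OF e[unfolded epq] this] show ?thesis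
      proof
        assume "p \<in> verts Q \<and> {x, p} \<in> edges K"
        then show ?thesis using inBA e epq \<open>x \<noteq> p\<close> by auto
      next
        assume "q \<in> verts Q \<and> {x, q} \<in> edges K"
        then show ?thesis using inBA[of q p] e epq \<open>x \<noteq> q\<close> by (auto simp: insert_commute)
      qed
    qed
  qed
  have ciB: "co_interval (big_ant H Q x y)"
  proof (rule ba_coint[OF wf fQ cQ xQ yQ])
    assume "y \<noteq> x"
    then show "\<forall>w. {x, w} \<in> edges H \<longrightarrow> {y, w} \<in> edges H \<longrightarrow> w \<in> verts Q"
      using inQ[OF xQ yQ] by blast
  qed
  have sgB: "subgraph (big_ant H Q x y) H"
  proof -
    have QsH: "subgraph Q H" using Qb by (simp add: is_block_def)
    have nb: "nbhd H z \<subseteq> verts H" for z using EV by (auto simp: nbhd_def)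
    have vB: "verts (big_ant H Q x y) \<subseteq> verts H" using BV[OF Qb] nb by (auto simp: big_ant_def)
    have eB: "edges (big_ant H Q x y) \<subseteq> edges H" using QsH by (auto simp: big_ant_def delta_def subgraph_def)
    have dl: "e \<subseteq> verts (big_ant H Q x y)" if "e \<in> delta H z" "z \<in> {x, y}" for e z
    proof -
      have "e \<in> edges H" "z \<in> e" using that by (auto simp: delta_def)
      moreover obtain a b where ab: "e = {a, b}" using wf \<open>e \<in> edges H\<close> by (auto simp: wf_graph_def card_2_iff)
      ultimately have "e = {z, (if z = a then b else a)}" by auto
      then obtain w where "e = {z, w}" by blast
      then show ?thesis using \<open>e \<in> edges H\<close> that(2) xQ yQ by (auto simp: big_ant_def nbhd_def)
    qed
    have "wf_graph (big_ant H Q x y)"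
      unfolding wf_graph_def
    proof (intro conjI ballI)
      show "finite (verts (big_ant H Q x y))" using vB wf finite_subset by (auto simp: wf_graph_def)
      fix e assume e: "e \<in> edges (big_ant H Q x y)"
      then show "card e = 2" using eB wf by (auto simp: wf_graph_def)
      show "e \<subseteq> verts (big_ant H Q x y)"
      proof -
        have "e \<in> edges Q \<or> e \<in> delta H x \<or> e \<in> delta H y" using e by (simp add: big_ant_def)
        then show ?thesis
        proof (elim disjE)
          assume "e \<in> edges Q" then show ?thesis using QsH by (auto simp: subgraph_def wf_graph_def big_ant_def)
        qed (use dl in auto)
      qed
    qed
    then show ?thesis using vB eB by (simp add: subgraph_def)
  qed
  have "edges K = edges (big_ant H Q x y)"
    using Kmax sgB ciB sub1 by blast
  then show ?thesis using yQ by blast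
qed

end
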